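(* Let $A_i, A_j, A_k, A_l$ be four distinct points lying on a circle in the Euclidean plane, in anticlockwise order (i.e. going around the circle anticlockwise one meets $A_i, A_j, A_k, A_l$ in this cyclic order). Then \[ \begin{vmatrix} x_{kl} & S_{ikl} & S_{jkl}\\ -x_{ij} & S_{ijk} & S_{ijl}\\ 0 & x_{ik} & x_{jl} \end{vmatrix} = \begin{vmatrix} x_{kl} & S_{ikl} & S_{jkl}\\ x_{ij} & S_{ijl} & S_{ijk}\\ 0 & x_{il} & x_{jk} \end{vmatrix} = \begin{vmatrix} x_{jk} & S_{ijk} & S_{jkl}\\ -x_{il} & S_{ikl} & S_{ijl}\\ 0 & x_{ik} & x_{jl} \end{vmatrix} = 0.\]
   Context: For points $A_p=(x_p,y_p)$ in the plane, $x_{pq}:=(x_q-x_p)^2+(y_q-y_p)^2$ denotes the squared distance between $A_p$ and $A_q$, and $S_{pqr}:=2[(x_q-x_p)(y_r-y_p)-(y_q-y_p)(x_r-x_p)]$ denotes four times the signed area of the triangle $A_pA_qA_r$ (positive when $A_p,A_q,A_r$ are ordered anticlockwise). *)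

theory Defs
  imports "HOL-Analysis.Analysis"
begin

definition sqd :: "real \<times> real \<Rightarrow> real \<times> real \<Rightarrow> real" where
  "sqd P Q = (fst Q - fst P)^2 + (snd Q - snd P)^2"

definition S3 :: "real \<times> real \<Rightarrow> real \<times> real \<Rightarrow> real \<times> real \<Rightarrow> real" where
  "S3 P Q R = 2 * ((fst Q - fst P) * (snd R - snd P) - (snd Q - snd P) * (fst R - fst P))"

definition concyclic_anticlockwise ::
  "real \<times> real \<Rightarrow> real \<times> real \<Rightarrow> real \<times> real \<Rightarrow> real \<times> real \<Rightarrow> bool" where
  "concyclic_anticlockwise Ai Aj Ak Al \<longleftrightarrow>
     (\<exists>c r ti tj tk tl. r > 0 \<and> ti < tj \<and> tj < tk \<and> tk < tl \<and> tl < ti + 2 * pi \<and>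
        Ai = (fst c + r * cos ti, snd c + r * sin ti) \<and>
        Aj = (fst c + r * cos tj, snd c + r * sin tj) \<and>
        Ak = (fst c + r * cos tk, snd c + r * sin tk) \<and>
        Al = (fst c + r * cos tl, snd c + r * sin tl))"

definition det3 :: "real \<Rightarrow> real \<Rightarrow> real \<Rightarrow> real \<Rightarrow> real \<Rightarrow> real \<Rightarrow> real \<Rightarrow> real \<Rightarrow> real \<Rightarrow> real" where
  "det3 a b c d e f g h i = det (vector [vector [a, b, c], vector [d, e, f], vector [g, h, i]] :: real^3^3)"

end

theory Submission imports Defs begin

definition hs :: "real \<Rightarrow> real \<Rightarrow> real \<Rightarrow> real \<Rightarrow> real" where
  "hs a b d e = 2 * (a * e - b * d)"

lemma sqd_h:
  assumes "a^2+b^2=1" "d^2+e^2=1"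
  shows "sqd (c1 + r*(a^2-b^2), c2 + 2*r*a*b) (c1 + r*(d^2-e^2), c2 + 2*r*d*e) = r^2 * (hs a b d e)^2"
proof -
  have "sqd (c1 + r*(a^2-b^2), c2 + 2*r*a*b) (c1 + r*(d^2-e^2), c2 + 2*r*d*e)
     = r^2 * ((d^2-e^2-a^2+b^2)^2 + 4*(d*e-a*b)^2)" by (simp add: sqd_def power2_eq_square algebra_simps)
  also have "(d^2-e^2-a^2+b^2)^2 + 4*(d*e-a*b)^2 = (hs a b d e)^2"
    using assms unfolding hs_def by algebra
  finally show ?thesis .
qed

lemma S3_h:
  assumes "a^2+b^2=1" "d^2+e^2=1" "f^2+g^2=1"
  shows "S3 (c1 + r*(a^2-b^2), c2 + 2*r*a*b) (c1 + r*(d^2-e^2), c2 + 2*r*d*e) (c1 + r*(f^2-g^2), c2 + 2*r*f*g)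
     = r^2 * (hs a b d e * hs d e f g * hs a b f g)"
proof -
  have "S3 (c1 + r*(a^2-b^2), c2 + 2*r*a*b) (c1 + r*(d^2-e^2), c2 + 2*r*d*e) (c1 + r*(f^2-g^2), c2 + 2*r*f*g)
     = r^2 * (2*((d^2-e^2-a^2+b^2)*(2*f*g-2*a*b) - (2*d*e-2*a*b)*(f^2-g^2-a^2+b^2)))"
    by (simp add: S3_def power2_eq_square algebra_simps)
  also have "2*((d^2-e^2-a^2+b^2)*(2*f*g-2*a*b) - (2*d*e-2*a*b)*(f^2-g^2-a^2+b^2)) = hs a b d e * hs d e f g * hs a b f g"
    using assms unfolding hs_def by algebra
  finally show ?thesis .
qed

lemma det3_eq: "det3 a b c d e f g h i = a*e*i + b*f*g + c*d*h - a*f*h - b*d*i - c*e*g"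
  unfolding det3_def det_3 by simp

lemma pt: "(fst c + r * cos (t::real), snd c + r * sin t) = (fst c + r * ((cos (t / 2))^2 - (sin (t / 2))^2), snd c + 2 * r * cos (t / 2) * sin (t / 2))"
proof -
  have "cos t = cos (2*(t/2::real))" "sin t = sin (2*(t/2))" by simp_all
  then show ?thesis by (simp only: cos_double sin_double) simp
qed

theorem theorem2p6:
  fixes Ai Aj Ak Al :: "real \<times> real"
  assumes "concyclic_anticlockwise Ai Aj Ak Al"
  shows "det3 (sqd Ak Al) (S3 Ai Ak Al) (S3 Aj Ak Al)
              (- sqd Ai Aj) (S3 Ai Aj Ak) (S3 Ai Aj Al)
              0 (sqd Ai Ak) (sqd Aj Al) = 0 \<and>
         det3 (sqd Ak Al) (S3 Ai Ak Al) (S3 Aj Ak Al)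
              (sqd Ai Aj) (S3 Ai Aj Al) (S3 Ai Aj Ak)
              0 (sqd Ai Al) (sqd Aj Ak) = 0 \<and>
         det3 (sqd Aj Ak) (S3 Ai Aj Ak) (S3 Aj Ak Al)
              (- sqd Ai Al) (S3 Ai Ak Al) (S3 Ai Aj Al)
              0 (sqd Ai Ak) (sqd Aj Al) = 0"
proof -
  obtain c r ti tj tk tl where
    I: "Ai = (fst c + r * cos ti, snd c + r * sin ti)" and
    J: "Aj = (fst c + r * cos tj, snd c + r * sin tj)" and
    K: "Ak = (fst c + r * cos tk, snd c + r * sin tk)" and
    L: "Al = (fst c + r * cos tl, snd c + r * sin tl)"
    using assms unfolding concyclic_anticlockwise_def by blast
  define a1 where "a1 = cos (ti/2)"
  define b1 where "b1 = sin (ti/2)"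
  define a2 where "a2 = cos (tj/2)"
  define b2 where "b2 = sin (tj/2)"
  define a3 where "a3 = cos (tk/2)"
  define b3 where "b3 = sin (tk/2)"
  define a4 where "a4 = cos (tl/2)"
  define b4 where "b4 = sin (tl/2)"
  have n: "a1^2+b1^2=1" "a2^2+b2^2=1" "a3^2+b3^2=1" "a4^2+b4^2=1"
    unfolding a1_def b1_def a2_def b2_def a3_def b3_def a4_def b4_def by simp_all
  have I': "Ai = (fst c + r*(a1^2-b1^2), snd c + 2*r*a1*b1)"
    unfolding I a1_def b1_def by (rule pt)
  have J': "Aj = (fst c + r*(a2^2-b2^2), snd c + 2*r*a2*b2)"
    unfolding J a2_def b2_def by (rule pt)
  have K': "Ak = (fst c + r*(a3^2-b3^2), snd c + 2*r*a3*b3)"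
    unfolding K a3_def b3_def by (rule pt)
  have L': "Al = (fst c + r*(a4^2-b4^2), snd c + 2*r*a4*b4)"
    unfolding L a4_def b4_def by (rule pt)
  define sij where "sij = hs a1 b1 a2 b2"
  define sik where "sik = hs a1 b1 a3 b3"
  define sil where "sil = hs a1 b1 a4 b4"
  define sjk where "sjk = hs a2 b2 a3 b3"
  define sjl where "sjl = hs a2 b2 a4 b4"
  define skl where "skl = hs a3 b3 a4 b4"
  have B: "skl * sjk * sjl - skl * sil * sik + sij * sil * sjl - sij * sjk * sik = 0"
    using n unfolding sij_def sik_def sil_def sjk_def sjl_def skl_def hs_def by algebra
  have e: "sqd Ai Aj = r^2 * sij^2" "sqd Ai Ak = r^2 * sik^2" "sqd Ai Al = r^2 * sil^2"
     "sqd Aj Ak = r^2 * sjk^2" "sqd Aj Al = r^2 * sjl^2" "sqd Ak Al = r^2 * skl^2"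
     "S3 Ai Aj Ak = r^2*(sij * sjk * sik)" "S3 Ai Aj Al = r^2*(sij * sjl * sil)"
     "S3 Ai Ak Al = r^2*(sik * skl * sil)" "S3 Aj Ak Al = r^2*(sjk * skl * sjl)"
    unfolding I' J' K' L' sij_def sik_def sil_def sjk_def sjl_def skl_def
    by (simp_all only: sqd_h S3_h n)
  have d1: "det3 (sqd Ak Al) (S3 Ai Ak Al) (S3 Aj Ak Al)
              (- sqd Ai Aj) (S3 Ai Aj Ak) (S3 Ai Aj Al)
              0 (sqd Ai Ak) (sqd Aj Al) = r^6 * sij * skl * sik * sjl*(skl * sjk * sjl - skl * sil * sik + sij * sil * sjl - sij * sjk * sik)"
    unfolding det3_eq e by algebra
  have d2: "det3 (sqd Ak Al) (S3 Ai Ak Al) (S3 Aj Ak Al)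
              (sqd Ai Aj) (S3 Ai Aj Al) (S3 Ai Aj Ak)
              0 (sqd Ai Al) (sqd Aj Ak) = r^6 * sij * skl * sil * sjk*(skl * sjk * sjl - skl * sil * sik + sij * sil * sjl - sij * sjk * sik)"
    unfolding det3_eq e by algebra
  have d3: "det3 (sqd Aj Ak) (S3 Ai Aj Ak) (S3 Aj Ak Al)
              (- sqd Ai Al) (S3 Ai Ak Al) (S3 Ai Aj Al)
              0 (sqd Ai Ak) (sqd Aj Al) = r^6 * sjk * sil * sik * sjl*(skl * sjk * sjl - skl * sil * sik + sij * sil * sjl - sij * sjk * sik)"
    unfolding det3_eq e by algebra
  show ?thesis unfolding d1 d2 d3 B by simp
qed
end
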